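(* Let $(p_0,\dots,p_{n-1})$ be a closed discrete curve and let $\kappa\in\mathbb{R}\setminus\{0\}$. The following are equivalent: (1) the curve is an equilibrium of $L+\kappa\mathrm{Vol}$, i.e. $\nabla_{p_k}L+\kappa\nabla_{p_k}\mathrm{Vol}=0$ for all $k$; (2) there exist $l_0>0$ and $\theta_0\in(-\pi,\pi)$ such that $l_k=l_0$ and $\theta_k=\theta_0$ for all $k$, and $\kappa l_0=2\tan(\theta_0/2)$.
   Context: A closed discrete curve is an $n$-tuple $(p_0,\dots,p_{n-1})$ of points of $\mathbb{R}^2$ ($n\ge3$), indices modulo $n$, with $l_k:=|p_{k+1}-p_k|\ne0$ for all $k$. $R_\varphi$ denotes rotation of $\mathbb{R}^2$ by $\varphi$. Fix $R\in\{R_{\pi/2},R_{-\pi/2}\}$ and set $\sigma=+1$ if $R=R_{\pi/2}$, $\sigma=-1$ if $R=R_{-\pi/2}$. Edge normal $\nu_k:=R((p_{k+1}-p_k)/l_k)$. The signed angle $\theta_k\in(-\pi,\pi]$ at vertex $p_k$ is defined by $\nu_k=R_{\sigma\theta_k}\nu_{k-1}$. Length $L=\sum_k l_k$, area $\mathrm{Vol}=\frac12\sum_k\langle p_k,\nu_k\rangle l_k$, both functions on $(\mathbb{R}^2)^n$; $\nabla_{p_k}$ is the gradient with respect to $p_k$. *)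

theory Defs
  imports "HOL-Analysis.Analysis"
begin

text \<open>The plane R^2 is modelled by the complex numbers (with the real inner product
  of HOL-Analysis). A closed discrete curve with n points is a map p :: nat => complex
  of which only p 0, ..., p (n-1) matter; indices are taken modulo n.
  The parameter sigma in {1,-1} encodes the choice R = R_(sigma pi/2).\<close>

definition rot :: "real \<Rightarrow> complex \<Rightarrow> complex" where
  "rot \<phi> z = cis \<phi> * z"

definition edge_len :: "nat \<Rightarrow> (nat \<Rightarrow> complex) \<Rightarrow> nat \<Rightarrow> real" where
  "edge_len n p k = cmod (p (Suc k mod n) - p (k mod n))"

definition closed_discrete_curve :: "nat \<Rightarrow> (nat \<Rightarrow> complex) \<Rightarrow> bool" where
  "closed_discrete_curve n p \<longleftrightarrow> n \<ge> 3 \<and> (\<forall>k<n. edge_len n p k \<noteq> 0)"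

definition edge_normal :: "real \<Rightarrow> nat \<Rightarrow> (nat \<Rightarrow> complex) \<Rightarrow> nat \<Rightarrow> complex" where
  "edge_normal \<sigma> n p k =
     rot (\<sigma> * pi / 2) ((p (Suc k mod n) - p (k mod n)) / complex_of_real (edge_len n p k))"

definition turn_angle :: "real \<Rightarrow> nat \<Rightarrow> (nat \<Rightarrow> complex) \<Rightarrow> nat \<Rightarrow> real" where
  "turn_angle \<sigma> n p k = (THE \<theta>. -pi < \<theta> \<and> \<theta> \<le> pi \<and>
      edge_normal \<sigma> n p k = rot (\<sigma> * \<theta>) (edge_normal \<sigma> n p (k + n - 1)))"

definition curve_length :: "nat \<Rightarrow> (nat \<Rightarrow> complex) \<Rightarrow> real" where
  "curve_length n p = (\<Sum>k<n. edge_len n p k)"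

definition curve_area :: "real \<Rightarrow> nat \<Rightarrow> (nat \<Rightarrow> complex) \<Rightarrow> real" where
  "curve_area \<sigma> n p = (1/2) * (\<Sum>k<n. inner (p k) (edge_normal \<sigma> n p k) * edge_len n p k)"

definition has_gradient_at :: "(complex \<Rightarrow> real) \<Rightarrow> complex \<Rightarrow> complex \<Rightarrow> bool" where
  "has_gradient_at f g x \<longleftrightarrow> (f has_derivative (\<lambda>h. inner g h)) (at x)"

end

theory Submission
  imports Defs
begin

definition prv :: "nat \<Rightarrow> nat \<Rightarrow> nat" where "prv n k = (k + n - 1) mod n"

definition T :: "nat \<Rightarrow> (nat \<Rightarrow> complex) \<Rightarrow> nat \<Rightarrow> complex" where
  "T n p j = (p (Suc j mod n) - p (j mod n)) / complex_of_real (edge_len n p j)"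

lemma prv_facts:
  assumes "k < n" "n \<ge> 3"
  shows "prv n k < n" "prv n k \<noteq> k" "Suc (prv n k) mod n = k" "Suc k mod n \<noteq> k"
    "Suc k mod n \<noteq> prv n k"
proof -
  show "prv n k < n" using assms by (simp add: prv_def)
  show "prv n k \<noteq> k" using assms unfolding prv_def
    by (cases "k = 0") (auto simp: mod_if)
  show "Suc (prv n k) mod n = k" using assms unfolding prv_def
    by (cases "k = 0") (auto simp: mod_if)
  show "Suc k mod n \<noteq> k" using assms by (auto simp: mod_if)
  show "Suc k mod n \<noteq> prv n k" using assms unfolding prv_def
    by (cases "k = 0"; cases "Suc k = n") (auto simp: mod_if)
qed

lemma suc_mod_eq_k:
  assumes "j < n" "k < n" "Suc j mod n = k"
  shows "j = prv n k"
  using assms unfolding prv_def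
  by (cases "Suc j = n") (auto simp: mod_if)

lemma prv_alt: "n \<ge> 1 \<Longrightarrow> (k + n - 1) mod n = prv n k" by (simp add: prv_def)

lemma edge_len_mod: "n > 0 \<Longrightarrow> edge_len n p (j mod n) = edge_len n p j"
  by (simp add: edge_len_def mod_Suc_eq)

lemma T_mod: "n > 0 \<Longrightarrow> T n p (j mod n) = T n p j"
  by (simp add: T_def edge_len_mod mod_Suc_eq)

lemma rot_sigma: "\<sigma> = 1 \<or> \<sigma> = -1 \<Longrightarrow> cis (\<sigma> * pi / 2) = \<i> * complex_of_real \<sigma>"
  by (auto simp: minus_divide_left[symmetric])

lemma sum_split:
  assumes "k < n" "n \<ge> 3"
  shows "(\<Sum>j<n. F j) = F (prv n k) + F k + (\<Sum>j\<in>{..<n}-{prv n k, k}. F j)"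
proof -
  have a: "prv n k \<in> {..<n}" using prv_facts[OF assms] by simp
  have b: "k \<in> {..<n} - {prv n k}" using prv_facts[OF assms] assms by simp
  have "(\<Sum>j<n. F j) = F (prv n k) + (\<Sum>j\<in>{..<n}-{prv n k}. F j)"
    by (rule sum.remove[OF _ a]) simp
  also have "(\<Sum>j\<in>{..<n}-{prv n k}. F j) = F k + (\<Sum>j\<in>{..<n}-{prv n k}-{k}. F j)"
    by (rule sum.remove[OF _ b]) simp
  also have "{..<n}-{prv n k}-{k} = {..<n}-{prv n k, k}" by blast
  finally show ?thesis by (simp add: add.assoc)
qed

lemma rest_eq:
  assumes "k < n" "n \<ge> 3" "j \<in> {..<n}-{prv n k, k}"
  shows "(p(k:=x)) j = p j" "(p(k:=x)) (Suc j mod n) = p (Suc j mod n)" "j mod n = j"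
    "edge_len n (p(k:=x)) j = edge_len n p j"
proof -
  have j: "j < n" "j \<noteq> prv n k" "j \<noteq> k" using assms(3) by auto
  have s: "Suc j mod n \<noteq> k" using suc_mod_eq_k[of j n k] j assms(1) by auto
  show "(p(k:=x)) j = p j" "(p(k:=x)) (Suc j mod n) = p (Suc j mod n)" "j mod n = j"
    using j s by auto
  then show "edge_len n (p(k:=x)) j = edge_len n p j" by (simp add: edge_len_def)
qed

lemma len_decomp:
  assumes "k < n" "n \<ge> 3"
  shows "curve_length n (p(k:=x)) = cmod (x - p (prv n k)) + cmod (p (Suc k mod n) - x)
     + (\<Sum>j\<in>{..<n}-{prv n k, k}. edge_len n p j)"
proof -
  note pf = prv_facts[OF assms]
  have "curve_length n (p(k:=x)) = edge_len n (p(k:=x)) (prv n k) + edge_len n (p(k:=x)) k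
     + (\<Sum>j\<in>{..<n}-{prv n k, k}. edge_len n (p(k:=x)) j)"
    unfolding curve_length_def by (rule sum_split[OF assms])
  also have "(\<Sum>j\<in>{..<n}-{prv n k, k}. edge_len n (p(k:=x)) j) = (\<Sum>j\<in>{..<n}-{prv n k, k}. edge_len n p j)"
    by (rule sum.cong) (auto simp: rest_eq[OF assms])
  also have "edge_len n (p(k:=x)) (prv n k) = cmod (x - p (prv n k))"
    using pf by (simp add: edge_len_def)
  also have "edge_len n (p(k:=x)) k = cmod (p (Suc k mod n) - x)"
    using pf assms by (simp add: edge_len_def)
  finally show ?thesis .
qed

lemma area_term:
  "inner z (edge_normal \<sigma> n q j) * edge_len n q j
     = inner z (cis (\<sigma>*pi/2) * (q (Suc j mod n) - q (j mod n)))"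
proof (cases "q (Suc j mod n) - q (j mod n) = 0")
  case True then show ?thesis by (simp add: edge_normal_def edge_len_def rot_def)
next
  case False
  define d where "d = q (Suc j mod n) - q (j mod n)"
  have l: "edge_len n q j = cmod d" by (simp add: edge_len_def d_def)
  have "cis (\<sigma>*pi/2) * (d / complex_of_real (cmod d)) = (1 / cmod d) *\<^sub>R (cis (\<sigma>*pi/2) * d)"
    by (simp add: scaleR_conv_of_real field_simps)
  then show ?thesis using False
    by (simp add: edge_normal_def rot_def l d_def[symmetric])
qed

lemma area_decomp:
  assumes "k < n" "n \<ge> 3"
  shows "curve_area \<sigma> n (p(k:=x)) = (1/2) * (inner (p (prv n k)) (cis (\<sigma>*pi/2) * (x - p (prv n k)))
     + inner x (cis (\<sigma>*pi/2) * (p (Suc k mod n) - x))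
     + (\<Sum>j\<in>{..<n}-{prv n k, k}. inner (p j) (cis (\<sigma>*pi/2) * (p (Suc j mod n) - p (j mod n)))))"
proof -
  note pf = prv_facts[OF assms]
  let ?F = "\<lambda>q j. inner (q j) (cis (\<sigma>*pi/2) * (q (Suc j mod n) - q (j mod n)))"
  have "curve_area \<sigma> n (p(k:=x)) = (1/2) * (\<Sum>j<n. ?F (p(k:=x)) j)"
    unfolding curve_area_def area_term ..
  also have "(\<Sum>j<n. ?F (p(k:=x)) j) = ?F (p(k:=x)) (prv n k) + ?F (p(k:=x)) k
     + (\<Sum>j\<in>{..<n}-{prv n k, k}. ?F (p(k:=x)) j)"
    by (rule sum_split[OF assms])
  also have "(\<Sum>j\<in>{..<n}-{prv n k, k}. ?F (p(k:=x)) j) = (\<Sum>j\<in>{..<n}-{prv n k, k}. ?F p j)"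
    by (rule sum.cong) (auto simp: rest_eq[OF assms] simp del: fun_upd_apply)
  finally have e: "curve_area \<sigma> n (p(k:=x)) = (1/2) * (?F (p(k:=x)) (prv n k) + ?F (p(k:=x)) k
     + (\<Sum>j\<in>{..<n}-{prv n k, k}. ?F p j))" .
  have f: "(p(k:=x)) (prv n k) = p (prv n k)" "(p(k:=x)) k = x" "(p(k:=x)) (Suc k mod n) = p (Suc k mod n)"
    "prv n k mod n = prv n k" "k mod n = k" "(p(k:=x)) (Suc (prv n k) mod n) = x"
    using pf assms by auto
  show ?thesis unfolding e f ..
qed

lemma grad_L:
  assumes "k < n" "n \<ge> 3" "\<forall>j<n. edge_len n p j \<noteq> 0"
  shows "has_gradient_at (\<lambda>x. curve_length n (p(k:=x))) (T n p (prv n k) - T n p k) (p k)"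
proof -
  note pf = prv_facts[OF assms(1,2)]
  define a where "a = p (prv n k)"
  define b where "b = p (Suc k mod n)"
  define C where "C = (\<Sum>j\<in>{..<n}-{prv n k, k}. edge_len n p j)"
  have la: "edge_len n p (prv n k) = cmod (p k - a)" using pf by (simp add: edge_len_def a_def)
  have lk: "edge_len n p k = cmod (b - p k)" using assms by (simp add: edge_len_def b_def)
  have na: "p k - a \<noteq> 0" using la assms(3) pf by fastforce
  have nb: "b - p k \<noteq> 0" using lk assms by fastforce
  have Ta: "T n p (prv n k) = sgn (p k - a)" using pf by (simp add: T_def la a_def sgn_eq)
  have Tk: "T n p k = sgn (b - p k)" using assms by (simp add: T_def lk b_def sgn_eq)
  have f: "(\<lambda>x. curve_length n (p(k:=x))) = (\<lambda>x. cmod (x - a) + cmod (b - x) + C)"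
    using len_decomp[OF assms(1,2)] by (simp add: a_def b_def C_def)
  have d1: "((\<lambda>x. cmod (x - a)) has_derivative (\<lambda>h. inner h (sgn (p k - a)))) (at (p k))"
    using has_derivative_compose[OF has_derivative_diff[OF has_derivative_ident has_derivative_const]
       has_derivative_norm[OF na]] by simp
  have d2: "((\<lambda>x. cmod (b - x)) has_derivative (\<lambda>h. inner (- h) (sgn (b - p k)))) (at (p k))"
    using has_derivative_compose[OF has_derivative_diff[OF has_derivative_const has_derivative_ident]
       has_derivative_norm[OF nb]] by simp
  have d: "((\<lambda>x. cmod (x - a) + cmod (b - x) + C) has_derivative
      (\<lambda>h. inner h (sgn (p k - a)) + inner (- h) (sgn (b - p k)) + 0)) (at (p k))"
    by (intro has_derivative_add d1 d2 has_derivative_const)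
  have e: "(\<lambda>h. inner h (sgn (p k - a)) + inner (- h) (sgn (b - p k)) + 0)
      = (\<lambda>h. inner (T n p (prv n k) - T n p k) h)"
    by (rule ext) (simp add: Ta Tk inner_diff_right inner_commute)
  show ?thesis unfolding has_gradient_at_def f using d e by simp
qed

lemma inner_ii_self: "inner z (\<i> * complex_of_real s * z) = 0"
  by (simp add: inner_complex_def algebra_simps)

lemma grad_V:
  assumes "k < n" "n \<ge> 3" "\<sigma> = 1 \<or> \<sigma> = -1"
  shows "has_gradient_at (\<lambda>x. curve_area \<sigma> n (p(k:=x)))
     (\<i> * complex_of_real (\<sigma>/2) * (p (Suc k mod n) - p (prv n k))) (p k)"
proof -
  define a where "a = p (prv n k)"
  define b where "b = p (Suc k mod n)"
  define C where "C = (\<Sum>j\<in>{..<n}-{prv n k, k}. inner (p j) (cis (\<sigma>*pi/2) * (p (Suc j mod n) - p (j mod n))))"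
  define g where "g = \<i> * complex_of_real (\<sigma>/2) * (b - a)"
  have f: "(\<lambda>x. curve_area \<sigma> n (p(k:=x))) = (\<lambda>x. (1/2) * C + inner g x)"
  proof (rule ext)
    fix x
    have "curve_area \<sigma> n (p(k:=x)) = (1/2) * (inner a (\<i> * complex_of_real \<sigma> * (x - a))
       + inner x (\<i> * complex_of_real \<sigma> * (b - x)) + C)"
      using area_decomp[OF assms(1,2), of \<sigma> p x] rot_sigma[OF assms(3)]
      by (simp add: a_def b_def C_def)
    also have "\<dots> = (1/2) * C + inner g x"
      by (simp add: g_def inner_complex_def field_simps)
    finally show "curve_area \<sigma> n (p(k:=x)) = (1/2) * C + inner g x" .
  qed
  have "((\<lambda>x. (1/2) * C + inner g x) has_derivative (\<lambda>h. 0 + inner g h)) (at (p k))"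
    by (intro has_derivative_add has_derivative_const bounded_linear_imp_has_derivative
        bounded_linear_inner_right)
  then show ?thesis unfolding has_gradient_at_def f g_def a_def b_def by simp
qed

lemma grad_unique:
  assumes "has_gradient_at f g x" "has_gradient_at f g' x"
  shows "g = g'"
proof -
  have "(\<lambda>h. inner g h) = (\<lambda>h. inner g' h)"
    using has_derivative_unique assms unfolding has_gradient_at_def by blast
  then have "inner g (g - g') = inner g' (g - g')" by metis
  then have "inner (g - g') (g - g') = 0" by (simp add: inner_diff_left)
  then show ?thesis by simp
qed

lemma cond1_iff:
  assumes "closed_discrete_curve n p" "\<sigma> = 1 \<or> \<sigma> = -1"
  shows "(\<forall>k<n. \<exists>gL gV.
             has_gradient_at (\<lambda>x. curve_length n (p(k := x))) gL (p k) \<and>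
             has_gradient_at (\<lambda>x. curve_area \<sigma> n (p(k := x))) gV (p k) \<and>
             gL + complex_of_real \<kappa> * gV = 0)
    \<longleftrightarrow> (\<forall>k<n. (T n p (prv n k) - T n p k) + complex_of_real \<kappa> *
             (\<i> * complex_of_real (\<sigma>/2) * (p (Suc k mod n) - p (prv n k))) = 0)"
proof -
  have n: "n \<ge> 3" "\<forall>j<n. edge_len n p j \<noteq> 0" using assms(1) by (auto simp: closed_discrete_curve_def)
  show ?thesis
  proof (intro iffI allI impI)
    fix k assume A: "\<forall>k<n. \<exists>gL gV.
             has_gradient_at (\<lambda>x. curve_length n (p(k := x))) gL (p k) \<and>
             has_gradient_at (\<lambda>x. curve_area \<sigma> n (p(k := x))) gV (p k) \<and>
             gL + complex_of_real \<kappa> * gV = 0" and k: "k < n"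
    then obtain gL gV where g: "has_gradient_at (\<lambda>x. curve_length n (p(k := x))) gL (p k)"
      "has_gradient_at (\<lambda>x. curve_area \<sigma> n (p(k := x))) gV (p k)" "gL + complex_of_real \<kappa> * gV = 0"
      by blast
    have e1: "gL = T n p (prv n k) - T n p k" using grad_unique[OF g(1) grad_L[OF k n]] .
    have e2: "gV = \<i> * complex_of_real (\<sigma>/2) * (p (Suc k mod n) - p (prv n k))"
      using grad_unique[OF g(2) grad_V[OF k n(1) assms(2)]] .
    show "(T n p (prv n k) - T n p k) + complex_of_real \<kappa> *
             (\<i> * complex_of_real (\<sigma>/2) * (p (Suc k mod n) - p (prv n k))) = 0"
      using g(3) unfolding e1 e2 .
  next
    fix k assume A: "\<forall>k<n. (T n p (prv n k) - T n p k) + complex_of_real \<kappa> *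
             (\<i> * complex_of_real (\<sigma>/2) * (p (Suc k mod n) - p (prv n k))) = 0" and k: "k < n"
    show "\<exists>gL gV.
             has_gradient_at (\<lambda>x. curve_length n (p(k := x))) gL (p k) \<and>
             has_gradient_at (\<lambda>x. curve_area \<sigma> n (p(k := x))) gV (p k) \<and>
             gL + complex_of_real \<kappa> * gV = 0"
      using grad_L[OF k n] grad_V[OF k n(1) assms(2)] A k by blast
  qed
qed

lemma unique_angle:
  assumes "cmod u = 1" "cmod v = 1" "\<sigma> = 1 \<or> \<sigma> = -1"
  shows "\<exists>!\<theta>. -pi < \<theta> \<and> \<theta> \<le> pi \<and> v = cis (\<sigma> * \<theta>) * u"
proof -
  define z where "z = v / u"
  have u0: "u \<noteq> 0" using assms by auto
  have z1: "cmod z = 1" using assms by (simp add: z_def norm_divide)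
  have z0: "z \<noteq> 0" using z1 by auto
  have sz: "sgn z = z" using z1 by (simp add: sgn_eq)
  have vz: "\<And>c. v = c * u \<longleftrightarrow> c = z" using u0 by (auto simp: z_def field_simps)
  have uniq: "\<theta>1 = \<theta>2" if "-pi < \<theta>1" "\<theta>1 \<le> pi" "-pi < \<theta>2" "\<theta>2 \<le> pi" "cis \<theta>1 = cis \<theta>2" for \<theta>1 \<theta>2
  proof -
    have "Arg (cis \<theta>2) = \<theta>1" by (rule cis_Arg_unique) (use that in \<open>auto simp: sgn_eq\<close>)
    moreover have "Arg (cis \<theta>2) = \<theta>2" by (rule cis_Arg_unique) (use that in \<open>auto simp: sgn_eq\<close>)
    ultimately show ?thesis by simp
  qed
  from assms(3) show ?thesis
  proof
    assume s: "\<sigma> = 1"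
    show ?thesis unfolding s vz
    proof (rule ex1I[of _ "Arg z"])
      show "- pi < Arg z \<and> Arg z \<le> pi \<and> cis (1 * Arg z) = z" using Arg_bounded cis_Arg[OF z0] sz by auto
    next
      fix \<theta> assume "- pi < \<theta> \<and> \<theta> \<le> pi \<and> cis (1 * \<theta>) = z"
      then show "\<theta> = Arg z" using uniq[of \<theta> "Arg z"] Arg_bounded[of z] cis_Arg[OF z0] sz by auto
    qed
  next
    assume s: "\<sigma> = -1"
    have cz: "cnj z \<noteq> 0" "sgn (cnj z) = cnj z" using z0 z1 by (auto simp: sgn_eq)
    have e: "cis (- t) = z \<longleftrightarrow> cis t = cnj z" for t
      by (metis cis_cnj complex_cnj_cnj)
    show ?thesis unfolding s vz
    proof (rule ex1I[of _ "Arg (cnj z)"])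
      show "- pi < Arg (cnj z) \<and> Arg (cnj z) \<le> pi \<and> cis (-1 * Arg (cnj z)) = z"
        using Arg_bounded cis_Arg[OF cz(1)] cz(2) e by auto
    next
      fix \<theta> assume "- pi < \<theta> \<and> \<theta> \<le> pi \<and> cis (-1 * \<theta>) = z"
      then show "\<theta> = Arg (cnj z)" using uniq[of \<theta> "Arg (cnj z)"] Arg_bounded[of "cnj z"] cis_Arg[OF cz(1)] cz(2) e
        by auto
    qed
  qed
qed

lemma T_norm: "edge_len n p j \<noteq> 0 \<Longrightarrow> cmod (T n p j) = 1"
  by (simp add: T_def norm_divide edge_len_def)

lemma T_scale: "edge_len n p j \<noteq> 0 \<Longrightarrow>
   complex_of_real (edge_len n p j) * T n p j = p (Suc j mod n) - p (j mod n)"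
  by (simp add: T_def)

lemma en_T: "\<sigma> = 1 \<or> \<sigma> = -1 \<Longrightarrow> edge_normal \<sigma> n p j = \<i> * complex_of_real \<sigma> * T n p j"
  by (simp add: edge_normal_def rot_def rot_sigma T_def)

lemma turn_char:
  assumes "closed_discrete_curve n p" "\<sigma> = 1 \<or> \<sigma> = -1" "k < n"
  shows "turn_angle \<sigma> n p k = (THE \<theta>. -pi < \<theta> \<and> \<theta> \<le> pi \<and> T n p k = cis (\<sigma> * \<theta>) * T n p (prv n k))"
proof -
  have n: "n \<ge> 3" using assms(1) by (auto simp: closed_discrete_curve_def)
  have tp: "T n p (k + n - 1) = T n p (prv n k)"
    using T_mod[of n p "k+n-1"] n by (simp add: prv_def)
  have s0: "\<i> * complex_of_real \<sigma> \<noteq> 0" using assms(2) by auto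
  have "(\<lambda>\<theta>. -pi < \<theta> \<and> \<theta> \<le> pi \<and>
      edge_normal \<sigma> n p k = rot (\<sigma> * \<theta>) (edge_normal \<sigma> n p (k + n - 1)))
     = (\<lambda>\<theta>. -pi < \<theta> \<and> \<theta> \<le> pi \<and> T n p k = cis (\<sigma> * \<theta>) * T n p (prv n k))"
  proof (rule ext)
    fix \<theta>
    have "(\<i> * complex_of_real \<sigma> * T n p k = cis (\<sigma> * \<theta>) * (\<i> * complex_of_real \<sigma> * T n p (prv n k)))
       \<longleftrightarrow> (\<i> * complex_of_real \<sigma>) * T n p k = (\<i> * complex_of_real \<sigma>) * (cis (\<sigma> * \<theta>) * T n p (prv n k))"
      by (simp add: algebra_simps)
    also have "\<dots> \<longleftrightarrow> T n p k = cis (\<sigma> * \<theta>) * T n p (prv n k)"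
      using s0 by (rule mult_left_cancel)
    finally show "(-pi < \<theta> \<and> \<theta> \<le> pi \<and>
      edge_normal \<sigma> n p k = rot (\<sigma> * \<theta>) (edge_normal \<sigma> n p (k + n - 1)))
     = (-pi < \<theta> \<and> \<theta> \<le> pi \<and> T n p k = cis (\<sigma> * \<theta>) * T n p (prv n k))"
      by (simp add: en_T[OF assms(2)] rot_def tp tp[simplified])
  qed
  then show ?thesis unfolding turn_angle_def by simp
qed

lemma turn_unique:
  assumes "closed_discrete_curve n p" "\<sigma> = 1 \<or> \<sigma> = -1" "k < n"
  shows "\<exists>!\<theta>. -pi < \<theta> \<and> \<theta> \<le> pi \<and> T n p k = cis (\<sigma> * \<theta>) * T n p (prv n k)"
proof -
  have n: "n \<ge> 3" "\<forall>j<n. edge_len n p j \<noteq> 0" using assms(1) by (auto simp: closed_discrete_curve_def)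
  show ?thesis
    by (rule unique_angle[OF T_norm T_norm assms(2)]) (use n prv_facts[OF assms(3) n(1)] assms(3) in auto)
qed

lemma turn_prop:
  assumes "closed_discrete_curve n p" "\<sigma> = 1 \<or> \<sigma> = -1" "k < n"
  shows "-pi < turn_angle \<sigma> n p k \<and> turn_angle \<sigma> n p k \<le> pi \<and>
     T n p k = cis (\<sigma> * turn_angle \<sigma> n p k) * T n p (prv n k)"
  unfolding turn_char[OF assms] by (rule theI'[OF turn_unique[OF assms]])

lemma turn_eq:
  assumes "closed_discrete_curve n p" "\<sigma> = 1 \<or> \<sigma> = -1" "k < n"
    and "-pi < \<theta>" "\<theta> \<le> pi" "T n p k = cis (\<sigma> * \<theta>) * T n p (prv n k)"
  shows "turn_angle \<sigma> n p k = \<theta>"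
  unfolding turn_char[OF assms(1-3)] by (rule the1_equality[OF turn_unique[OF assms(1-3)]]) (use assms in auto)

lemma key_sc:
  fixes K la lk sn cs :: real
  assumes K: "K \<noteq> 0" and la: "la > 0" and lk: "lk > 0" and sc: "sn^2 + cs^2 = 1"
  shows "(2 * sn^2 = K*lk*(2 * sn*cs) \<and> 2 * sn*cs = K*(lk*(cs^2-sn^2)+la)) \<longleftrightarrow> (lk = la \<and> K*lk = sn/cs)"
proof
  assume A: "2 * sn^2 = K*lk*(2 * sn*cs) \<and> 2 * sn*cs = K*(lk*(cs^2-sn^2)+la)"
  have sn0: "sn \<noteq> 0"
  proof
    assume "sn = 0"
    then have "cs^2 = 1" "K*(lk*(cs^2-sn^2)+la) = 0" using sc A by auto
    then have "K*(lk+la) = 0" using \<open>sn = 0\<close> by simp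
    then show False using K la lk by simp
  qed
  have e1: "sn = K*lk*cs"
  proof -
    have "sn * sn = sn * (K*lk*cs)" using A by (simp add: power2_eq_square algebra_simps)
    then show ?thesis using sn0 by simp
  qed
  have cs0: "cs \<noteq> 0" using e1 sn0 by auto
  have B: "2 * sn*cs = K*(lk*(cs^2-sn^2)+la)" using A by simp
  have "(2 * sn*cs)*cs = (K*(lk*(cs^2-sn^2)+la))*cs" using arg_cong[OF B, of "\<lambda>x. x*cs"] by simp
  then have "2 * sn*cs*cs = K*lk*cs*(cs^2-sn^2) + K*la*cs" by (simp only: algebra_simps)
  then have "2 * sn*cs*cs = sn*(cs^2-sn^2) + K*la*cs" using e1 by simp
  then have "K*la*cs = sn*(sn^2+cs^2)" by (simp add: power2_eq_square algebra_simps)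
  then have "K*la*cs = sn" using sc by simp
  then have "la = lk" using e1 K cs0 by auto
  moreover have "K*lk = sn/cs" using e1 cs0 by (simp add: field_simps)
  ultimately show "lk = la \<and> K*lk = sn/cs" by simp
next
  assume B: "lk = la \<and> K*lk = sn/cs"
  have cs0: "cs \<noteq> 0"
  proof
    assume "cs = 0" then have "K*lk = 0" using B by auto
    then show False using K lk by simp
  qed
  have e1: "sn = K*lk*cs" using B cs0 by (auto simp: field_simps)
  have "2 * sn^2 = K*lk*(2 * sn*cs)" using e1 by (simp add: power2_eq_square algebra_simps)
  moreover have "2 * sn*cs = K*(lk*(cs^2-sn^2)+la)"
  proof -
    have "K*(lk*(cs^2-sn^2)+la) = K*lk*(cs^2 - sn^2 + 1)" using B by (simp add: algebra_simps)
    also have "\<dots> = K*lk*cs*(2*cs)"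
    proof -
      have "cs^2 - sn^2 + 1 = 2*cs*cs" using sc unfolding power2_eq_square by linarith
      then show ?thesis by simp
    qed
    also have "\<dots> = 2 * sn*cs" using e1 by simp
    finally show ?thesis by simp
  qed
  ultimately show "2 * sn^2 = K*lk*(2 * sn*cs) \<and> 2 * sn*cs = K*(lk*(cs^2-sn^2)+la)" by simp
qed

lemma key_real:
  fixes \<kappa> la lk \<theta> :: real
  assumes "\<kappa> \<noteq> 0" "la > 0" "lk > 0"
  shows "(1 - cos \<theta> = (\<kappa>/2)*lk* sin \<theta> \<and> sin \<theta> = (\<kappa>/2)*(lk* cos \<theta> + la))
     \<longleftrightarrow> (lk = la \<and> \<kappa>*lk = 2*tan(\<theta>/2))"
proof -
  define t where "t = \<theta>/2"
  have th: "\<theta> = 2*t" by (simp add: t_def)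
  have sc: "(sin t)^2 + (cos t)^2 = 1" by simp
  have c2: "cos \<theta> = (cos t)^2 - (sin t)^2" unfolding th by (rule cos_double)
  have s2: "sin \<theta> = 2 * sin t * cos t" unfolding th by (rule sin_double)
  have one: "1 - cos \<theta> = 2 * (sin t)^2" using c2 by (simp add: sin_squared_eq)
  have K: "\<kappa>/2 \<noteq> 0" using assms by simp
  have "(1 - cos \<theta> = (\<kappa>/2)*lk* sin \<theta> \<and> sin \<theta> = (\<kappa>/2)*(lk* cos \<theta> + la))
      \<longleftrightarrow> (2*(sin t)^2 = (\<kappa>/2)*lk*(2* sin t* cos t) \<and> 2* sin t* cos t = (\<kappa>/2)*(lk*((cos t)^2-(sin t)^2)+la))"
    unfolding one unfolding s2 c2 ..
  also have "\<dots> \<longleftrightarrow> (lk = la \<and> (\<kappa>/2)*lk = sin t/cos t)"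
    by (rule key_sc[OF K assms(2,3) sc])
  also have "\<dots> \<longleftrightarrow> (lk = la \<and> \<kappa>*lk = 2*tan(\<theta>/2))"
    by (auto simp: t_def tan_def)
  finally show ?thesis .
qed

lemma key_complex:
  assumes u: "cmod u = 1" and v: "v = cis (\<sigma> * \<theta>) * u" and s: "\<sigma> = 1 \<or> \<sigma> = -1"
  shows "(u - v) + complex_of_real \<kappa> * (\<i> * complex_of_real (\<sigma>/2) *
           (complex_of_real lk * v + complex_of_real la * u)) = 0
     \<longleftrightarrow> (1 - cos \<theta> = (\<kappa>/2)*lk * sin \<theta> \<and> sin \<theta> = (\<kappa>/2)*(lk * cos \<theta> + la))"
proof -
  define W where "W = 1 - cis (\<sigma> * \<theta>) + complex_of_real \<kappa> * (\<i> * complex_of_real (\<sigma>/2) *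
           (complex_of_real lk * cis (\<sigma> * \<theta>) + complex_of_real la))"
  have u0: "u \<noteq> 0" using u by auto
  have "(u - v) + complex_of_real \<kappa> * (\<i> * complex_of_real (\<sigma>/2) *
           (complex_of_real lk * v + complex_of_real la * u)) = u * W"
    unfolding v W_def by (simp add: algebra_simps)
  then have "(u - v) + complex_of_real \<kappa> * (\<i> * complex_of_real (\<sigma>/2) *
           (complex_of_real lk * v + complex_of_real la * u)) = 0 \<longleftrightarrow> W = 0"
    using u0 by simp
  also have "W = 0 \<longleftrightarrow> (1 - cos \<theta> = (\<kappa>/2)*lk * sin \<theta> \<and> sin \<theta> = (\<kappa>/2)*(lk * cos \<theta> + la))"
    using s
  proof
    assume "\<sigma> = 1"
    then show ?thesis unfolding W_def complex_eq_iff by (simp add: algebra_simps) linarith?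
  next
    assume "\<sigma> = -1"
    then show ?thesis unfolding W_def complex_eq_iff by (simp add: algebra_simps) linarith?
  qed
  finally show ?thesis .
qed

lemma per_k:
  assumes c: "closed_discrete_curve n p" and s: "\<sigma> = 1 \<or> \<sigma> = -1" and K: "\<kappa> \<noteq> 0" and k: "k < n"
  shows "(T n p (prv n k) - T n p k) + complex_of_real \<kappa> *
             (\<i> * complex_of_real (\<sigma>/2) * (p (Suc k mod n) - p (prv n k))) = 0
    \<longleftrightarrow> (edge_len n p k = edge_len n p (prv n k) \<and> \<kappa> * edge_len n p k = 2 * tan (turn_angle \<sigma> n p k / 2))"
proof -
  have n: "n \<ge> 3" "\<forall>j<n. edge_len n p j \<noteq> 0" using c by (auto simp: closed_discrete_curve_def)
  note pf = prv_facts[OF k n(1)]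
  have lk0: "edge_len n p k \<noteq> 0" and la0: "edge_len n p (prv n k) \<noteq> 0" using n k pf by auto
  have lkp: "edge_len n p k > 0" using lk0 by (simp add: edge_len_def)
  have lap: "edge_len n p (prv n k) > 0" using la0 by (simp add: edge_len_def)
  have d: "p (Suc k mod n) - p (prv n k) = complex_of_real (edge_len n p k) * T n p k
      + complex_of_real (edge_len n p (prv n k)) * T n p (prv n k)"
    unfolding T_scale[OF lk0] T_scale[OF la0] using pf k by simp
  note tp = turn_prop[OF c s k]
  show ?thesis unfolding d
    by (subst key_complex[OF T_norm[OF la0] conjunct2[OF conjunct2[OF tp]] s])
       (rule key_real[OF K lap lkp])
qed

lemma prv_Suc: "Suc k < n \<Longrightarrow> prv n (Suc k) = k"
  by (simp add: prv_def)

theorem mainTheorem4: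
  fixes n :: nat and p :: "nat \<Rightarrow> complex" and \<sigma> \<kappa> :: real
  assumes "closed_discrete_curve n p"
    and "\<sigma> = 1 \<or> \<sigma> = -1"
    and "\<kappa> \<noteq> 0"
  shows "(\<forall>k<n. \<exists>gL gV.
             has_gradient_at (\<lambda>x. curve_length n (p(k := x))) gL (p k) \<and>
             has_gradient_at (\<lambda>x. curve_area \<sigma> n (p(k := x))) gV (p k) \<and>
             gL + complex_of_real \<kappa> * gV = 0)
     \<longleftrightarrow> (\<exists>l0 \<theta>0. l0 > 0 \<and> -pi < \<theta>0 \<and> \<theta>0 < pi \<and>
             (\<forall>k<n. edge_len n p k = l0 \<and> turn_angle \<sigma> n p k = \<theta>0) \<and>
             \<kappa> * l0 = 2 * tan (\<theta>0 / 2))"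
proof -
  note c = assms(1) and s = assms(2) and K = assms(3)
  have n: "n \<ge> 3" "\<forall>j<n. edge_len n p j \<noteq> 0" using c by (auto simp: closed_discrete_curve_def)
  have "(\<forall>k<n. \<exists>gL gV.
             has_gradient_at (\<lambda>x. curve_length n (p(k := x))) gL (p k) \<and>
             has_gradient_at (\<lambda>x. curve_area \<sigma> n (p(k := x))) gV (p k) \<and>
             gL + complex_of_real \<kappa> * gV = 0)
    \<longleftrightarrow> (\<forall>k<n. edge_len n p k = edge_len n p (prv n k) \<and> \<kappa> * edge_len n p k = 2 * tan (turn_angle \<sigma> n p k / 2))"
    unfolding cond1_iff[OF c s] using per_k[OF c s K] by blast
  also have "\<dots> \<longleftrightarrow> (\<exists>l0 \<theta>0. l0 > 0 \<and> -pi < \<theta>0 \<and> \<theta>0 < pi \<and>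
             (\<forall>k<n. edge_len n p k = l0 \<and> turn_angle \<sigma> n p k = \<theta>0) \<and>
             \<kappa> * l0 = 2 * tan (\<theta>0 / 2))"
  proof
    assume A: "\<forall>k<n. edge_len n p k = edge_len n p (prv n k) \<and> \<kappa> * edge_len n p k = 2 * tan (turn_angle \<sigma> n p k / 2)"
    define l0 where "l0 = edge_len n p 0"
    define \<theta>0 where "\<theta>0 = 2 * arctan (\<kappa> * l0 / 2)"
    have L: "edge_len n p k = l0" if "k < n" for k
      using that
    proof (induction k)
      case 0 then show ?case by (simp add: l0_def)
    next
      case (Suc k)
      then have "edge_len n p (Suc k) = edge_len n p (prv n (Suc k))" using A by blast
      then show ?case using Suc prv_Suc[OF Suc.prems] by simp
    qed
    have l00: "l0 \<noteq> 0" using n unfolding l0_def by auto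
    then have l0p: "l0 > 0" unfolding l0_def by (simp add: edge_len_def)
    have Th: "turn_angle \<sigma> n p k = \<theta>0" if k: "k < n" for k
    proof -
      define t where "t = turn_angle \<sigma> n p k / 2"
      have tb: "-(pi/2) < t" "t \<le> pi/2" using turn_prop[OF c s k] by (auto simp: t_def)
      have "\<kappa> * edge_len n p k = 2 * tan (turn_angle \<sigma> n p k / 2)" using A k by blast
      then have tt: "tan t = \<kappa> * l0 / 2" using L[OF k] by (simp add: t_def)
      have "\<kappa> * l0 / 2 \<noteq> 0" using K l0p by simp
      then have "tan t \<noteq> 0" unfolding tt .
      then have "t \<noteq> pi/2" using tan_pi_half by metis
      then have "t < pi/2" using tb by simp
      then have "arctan (tan t) = t" using tb arctan_tan by simp
      then have "arctan (\<kappa> * l0 / 2) = t" unfolding tt .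
      then show ?thesis unfolding \<theta>0_def by (simp add: t_def)
    qed
    show "\<exists>l0 \<theta>0. l0 > 0 \<and> -pi < \<theta>0 \<and> \<theta>0 < pi \<and>
             (\<forall>k<n. edge_len n p k = l0 \<and> turn_angle \<sigma> n p k = \<theta>0) \<and>
             \<kappa> * l0 = 2 * tan (\<theta>0 / 2)"
    proof (intro exI conjI allI impI)
      show "l0 > 0" by (rule l0p)
      show "-pi < \<theta>0" "\<theta>0 < pi" unfolding \<theta>0_def using arctan_bounded[of "\<kappa> * l0 / 2"] by auto
      show "\<kappa> * l0 = 2 * tan (\<theta>0 / 2)" unfolding \<theta>0_def by (simp add: tan_arctan)
    qed (auto simp: L Th)
  next
    assume "\<exists>l0 \<theta>0. l0 > 0 \<and> -pi < \<theta>0 \<and> \<theta>0 < pi \<and>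
             (\<forall>k<n. edge_len n p k = l0 \<and> turn_angle \<sigma> n p k = \<theta>0) \<and>
             \<kappa> * l0 = 2 * tan (\<theta>0 / 2)"
    then obtain l0 \<theta>0 where B: "\<forall>k<n. edge_len n p k = l0 \<and> turn_angle \<sigma> n p k = \<theta>0"
      "\<kappa> * l0 = 2 * tan (\<theta>0 / 2)" by blast
    show "\<forall>k<n. edge_len n p k = edge_len n p (prv n k) \<and> \<kappa> * edge_len n p k = 2 * tan (turn_angle \<sigma> n p k / 2)"
    proof (intro allI impI)
      fix k assume k: "k < n"
      have "prv n k < n" using prv_facts[OF k n(1)] by simp
      then show "edge_len n p k = edge_len n p (prv n k) \<and> \<kappa> * edge_len n p k = 2 * tan (turn_angle \<sigma> n p k / 2)"
        using B k by simp
    qed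
  qed
  finally show ?thesis .
qed

end
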